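(* Consider a $k$-stage screening process over a finite set $\mathcal X$ of groups in which all tests are minimally effective, i.e. $\tau^i_{X1}>\tau^i_{X0}\ge0$ for all $X\in\mathcal X$, $i\in[k]$. Among promotion policies satisfying Equal Opportunity (for which precision is defined), the maximum interview efficiency is attained by the Opportunity Ratio policy, and it equals $$\frac{\|q\|_1}{\|q\|_1+\sum_{X\in\mathcal X}u_X\prod_{i=1}^k(\tau^i_{X0}/\tau^i_{X1})}.$$
   Context: Each group $X$ has base rate $q_X$ (probability a member is qualified), $u_X=1-q_X$, and $\|q\|_1=\sum_Xq_X$. At stage $i$, $\tau^i_{X1}$ (resp. $\tau^i_{X0}$) is the probability a qualified (resp. unqualified) member of group $X$ passes test $i$. A policy specifies $\pi^i_{X1},\pi^i_{X0}\in[0,1]$, the probabilities that a member of $X$ who passes (resp. fails) test $i$ is promoted to stage $i+1$ (promotion depends only on group and current test outcome). Let $M_X=\prod_{i=1}^k(\tau^i_{X1}\pi^i_{X1}+(1-\tau^i_{X1})\pi^i_{X0})$ and $N_X=\prod_{i=1}^k(\tau^i_{X0}\pi^i_{X1}+(1-\tau^i_{X0})\pi^i_{X0})$ (probabilities that a qualified, resp. unqualified, member of $X$ reaches the final interview). The policy satisfies Equal Opportunity if $M_X$ is the same for all $X$. Interview efficiency (precision) is $\frac{\sum_Xq_XM_X}{\sum_X(q_XM_X+u_XN_X)}$, defined when the denominator is positive. Opportunity Ratio policy: let $X^*=\arg\min_X\prod_j\tau^j_{X1}$ and $\rho_X=\prod_{j=1}^k\tau^j_{X^*1}/\tau^j_{X1}$;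 set $\pi^1_{X1}=\rho_X$, $\pi^1_{X0}=0$, and $\pi^i_{X1}=1,\pi^i_{X0}=0$ for $i\ge2$. *)

theory Defs
  imports Complex_Main
begin

text \<open>Stages are indexed by 1..k; groups range over a finite set G.
  tau1 i X (resp. tau0 i X): probability that a qualified (resp. unqualified)
  member of group X passes test i.  pi1 i X (resp. pi0 i X): probability that a
  member of X who passes (resp. fails) test i is promoted to stage i+1.\<close>

definition reach_prob :: "nat \<Rightarrow> (nat \<Rightarrow> 'g \<Rightarrow> real) \<Rightarrow> (nat \<Rightarrow> 'g \<Rightarrow> real)
    \<Rightarrow> (nat \<Rightarrow> 'g \<Rightarrow> real) \<Rightarrow> 'g \<Rightarrow> real" where
  "reach_prob k tau pi1 pi0 X =
     (\<Prod>i\<in>{1..k}. tau i X * pi1 i X + (1 - tau i X) * pi0 i X)"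

definition valid_policy :: "'g set \<Rightarrow> nat \<Rightarrow> (nat \<Rightarrow> 'g \<Rightarrow> real) \<Rightarrow> (nat \<Rightarrow> 'g \<Rightarrow> real) \<Rightarrow> bool" where
  "valid_policy G k pi1 pi0 \<longleftrightarrow>
     (\<forall>i\<in>{1..k}. \<forall>X\<in>G. 0 \<le> pi1 i X \<and> pi1 i X \<le> 1 \<and> 0 \<le> pi0 i X \<and> pi0 i X \<le> 1)"

definition equal_opportunity :: "'g set \<Rightarrow> nat \<Rightarrow> (nat \<Rightarrow> 'g \<Rightarrow> real)
    \<Rightarrow> (nat \<Rightarrow> 'g \<Rightarrow> real) \<Rightarrow> (nat \<Rightarrow> 'g \<Rightarrow> real) \<Rightarrow> bool" where
  "equal_opportunity G k tau1 pi1 pi0 \<longleftrightarrow>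
     (\<forall>X\<in>G. \<forall>Y\<in>G. reach_prob k tau1 pi1 pi0 X = reach_prob k tau1 pi1 pi0 Y)"

definition efficiency_denom :: "'g set \<Rightarrow> nat \<Rightarrow> ('g \<Rightarrow> real) \<Rightarrow> (nat \<Rightarrow> 'g \<Rightarrow> real)
    \<Rightarrow> (nat \<Rightarrow> 'g \<Rightarrow> real) \<Rightarrow> (nat \<Rightarrow> 'g \<Rightarrow> real) \<Rightarrow> (nat \<Rightarrow> 'g \<Rightarrow> real) \<Rightarrow> real" where
  "efficiency_denom G k q tau1 tau0 pi1 pi0 =
     (\<Sum>X\<in>G. q X * reach_prob k tau1 pi1 pi0 X + (1 - q X) * reach_prob k tau0 pi1 pi0 X)"

text \<open>Interview efficiency (precision); only meaningful when the denominator is positive.\<close>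
definition efficiency :: "'g set \<Rightarrow> nat \<Rightarrow> ('g \<Rightarrow> real) \<Rightarrow> (nat \<Rightarrow> 'g \<Rightarrow> real)
    \<Rightarrow> (nat \<Rightarrow> 'g \<Rightarrow> real) \<Rightarrow> (nat \<Rightarrow> 'g \<Rightarrow> real) \<Rightarrow> (nat \<Rightarrow> 'g \<Rightarrow> real) \<Rightarrow> real" where
  "efficiency G k q tau1 tau0 pi1 pi0 =
     (\<Sum>X\<in>G. q X * reach_prob k tau1 pi1 pi0 X) / efficiency_denom G k q tau1 tau0 pi1 pi0"

definition OR_rho :: "'g set \<Rightarrow> nat \<Rightarrow> (nat \<Rightarrow> 'g \<Rightarrow> real) \<Rightarrow> 'g \<Rightarrow> real" where
  "OR_rho G k tau1 X =
     Min ((\<lambda>Y. \<Prod>j\<in>{1..k}. tau1 j Y) ` G) / (\<Prod>j\<in>{1..k}. tau1 j X)"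

definition OR_pi1 :: "'g set \<Rightarrow> nat \<Rightarrow> (nat \<Rightarrow> 'g \<Rightarrow> real) \<Rightarrow> nat \<Rightarrow> 'g \<Rightarrow> real" where
  "OR_pi1 G k tau1 i X = (if i = 1 then OR_rho G k tau1 X else 1)"

definition OR_pi0 :: "nat \<Rightarrow> 'g \<Rightarrow> real" where
  "OR_pi0 i X = 0"

end

theory Submission
  imports Defs
begin

lemma stage_ineq:
  fixes t0 t1 p1 p0 :: real
  assumes "0 \<le> t0" "t0 < t1" "0 \<le> p0"
  shows "(t0 / t1) * (t1 * p1 + (1 - t1) * p0) \<le> t0 * p1 + (1 - t0) * p0"
proof -
  have t1: "0 < t1" using assms by linarith
  have "(t0 / t1) * (t1 * p1 + (1 - t1) * p0) = t0 * p1 + (t0 / t1) * (1 - t1) * p0"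
    using t1 by (simp add: field_simps)
  also have "(t0 / t1) * (1 - t1) * p0 \<le> (1 - t0) * p0"
  proof -
    have "t0 * (1 - t1) \<le> t1 * (1 - t0)" using assms by (simp add: algebra_simps)
    hence "(t0 / t1) * (1 - t1) \<le> 1 - t0" using t1 by (simp add: field_simps)
    thus ?thesis using assms(3) by (rule mult_right_mono)
  qed
  finally show ?thesis by simp
qed

lemma frac_mono:
  fixes a b c :: real
  assumes "0 < a" "0 \<le> c" "c \<le> b"
  shows "a / (a + b) \<le> a / (a + c)"
  using assms by (simp add: frac_le)

theorem mainTheorem11:
  fixes G :: "'g set" and k :: nat and q :: "'g \<Rightarrow> real"
    and tau1 tau0 :: "nat \<Rightarrow> 'g \<Rightarrow> real"
  assumes "finite G"
    and "\<forall>X\<in>G. 0 \<le> q X \<and> q X \<le> 1"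
    and "\<exists>X\<in>G. 0 < q X"
    and "\<forall>i\<in>{1..k}. \<forall>X\<in>G. 0 \<le> tau0 i X \<and> tau0 i X < tau1 i X \<and> tau1 i X \<le> 1"
  shows "valid_policy G k (OR_pi1 G k tau1) OR_pi0
    \<and> equal_opportunity G k tau1 (OR_pi1 G k tau1) OR_pi0
    \<and> 0 < efficiency_denom G k q tau1 tau0 (OR_pi1 G k tau1) OR_pi0
    \<and> efficiency G k q tau1 tau0 (OR_pi1 G k tau1) OR_pi0 =
        (\<Sum>X\<in>G. q X) / ((\<Sum>X\<in>G. q X) + (\<Sum>X\<in>G. (1 - q X) * (\<Prod>i\<in>{1..k}. tau0 i X / tau1 i X)))
    \<and> (\<forall>pi1 pi0. valid_policy G k pi1 pi0 \<and> equal_opportunity G k tau1 pi1 pi0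
          \<and> 0 < efficiency_denom G k q tau1 tau0 pi1 pi0
        \<longrightarrow> efficiency G k q tau1 tau0 pi1 pi0
            \<le> efficiency G k q tau1 tau0 (OR_pi1 G k tau1) OR_pi0)"
proof -
  note fin = assms(1) and qb = assms(2) and tb = assms(4)
  define P1 where "P1 X = (\<Prod>j\<in>{1..k}. tau1 j X)" for X
  define P0 where "P0 X = (\<Prod>j\<in>{1..k}. tau0 j X)" for X
  define r where "r X = (\<Prod>i\<in>{1..k}. tau0 i X / tau1 i X)" for X
  define m where "m = Min (P1 ` G)"
  define Q where "Q = (\<Sum>X\<in>G. q X)"
  define S where "S = (\<Sum>X\<in>G. (1 - q X) * r X)"
  have Gne: "G \<noteq> {}" using assms(3) by blast
  have P1pos: "0 < P1 X" if "X \<in> G" for X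
    unfolding P1_def using tb that by (intro prod_pos) (fastforce)
  have P0nn: "0 \<le> P0 X" if "X \<in> G" for X
    unfolding P0_def using tb that by (intro prod_nonneg) (fastforce)
  have rnn: "0 \<le> r X" if "X \<in> G" for X
    unfolding r_def using tb that by (intro prod_nonneg) (fastforce)
  have rP: "r X = P0 X / P1 X" for X
    unfolding r_def P0_def P1_def by (rule prod_dividef)
  have mpos: "0 < m" unfolding m_def using fin Gne P1pos by (subst Min_gr_iff) auto
  have mle: "m \<le> P1 X" if "X \<in> G" for X unfolding m_def using fin that by simp
  have rho: "OR_rho G k tau1 X = m / P1 X" for X unfolding OR_rho_def m_def P1_def by simp
  have Qpos: "0 < Q" unfolding Q_def
  proof -
    obtain X where X: "X \<in> G" "0 < q X" using assms(3) by blast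
    have "q X \<le> (\<Sum>X\<in>G. q X)" using fin X qb by (intro member_le_sum) auto
    thus "0 < (\<Sum>X\<in>G. q X)" using X by linarith
  qed
  have Snn: "0 \<le> S" unfolding S_def using qb rnn by (intro sum_nonneg) auto
  have genreach: "reach_prob k tau (OR_pi1 G k tau1) OR_pi0 X = (\<Prod>j\<in>{1..k}. tau j X) * OR_rho G k tau1 X"
    if "X \<in> G" for tau X
  proof (cases "k = 0")
    case True
    have "P1 ` G = {1}" using Gne unfolding P1_def True by auto
    hence "m = 1" unfolding m_def by simp
    thus ?thesis using rho[of X] True unfolding reach_prob_def P1_def by simp
  next
    case False
    have "reach_prob k tau (OR_pi1 G k tau1) OR_pi0 X
        = (\<Prod>i\<in>{1..k}. tau i X * (if i = 1 then OR_rho G k tau1 X else 1))"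
      unfolding reach_prob_def OR_pi1_def OR_pi0_def by (intro prod.cong) auto
    also have "\<dots> = (\<Prod>j\<in>{1..k}. tau j X) * (\<Prod>i\<in>{1..k}. (if i = 1 then OR_rho G k tau1 X else 1))"
      by (rule prod.distrib)
    also have "(\<Prod>i\<in>{1..k}. (if i = 1 then OR_rho G k tau1 X else 1)) = OR_rho G k tau1 X"
      using False by (subst prod.delta) auto
    finally show ?thesis .
  qed
  have R1: "reach_prob k tau1 (OR_pi1 G k tau1) OR_pi0 X = m" if "X \<in> G" for X
  proof -
    have "reach_prob k tau1 (OR_pi1 G k tau1) OR_pi0 X = P1 X * (m / P1 X)"
      using genreach[OF that, of tau1] unfolding rho P1_def .
    thus ?thesis using P1pos[OF that] by simp
  qed
  have R0: "reach_prob k tau0 (OR_pi1 G k tau1) OR_pi0 X = m * r X" if "X \<in> G" for X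
  proof -
    have "reach_prob k tau0 (OR_pi1 G k tau1) OR_pi0 X = P0 X * (m / P1 X)"
      using genreach[OF that, of tau0] unfolding rho P0_def .
    thus ?thesis unfolding rP by simp
  qed
  have denOR: "efficiency_denom G k q tau1 tau0 (OR_pi1 G k tau1) OR_pi0 = m * (Q + S)"
  proof -
    have "efficiency_denom G k q tau1 tau0 (OR_pi1 G k tau1) OR_pi0
        = (\<Sum>X\<in>G. m * q X + m * ((1 - q X) * r X))"
      unfolding efficiency_denom_def by (intro sum.cong) (simp_all add: R0 R1 algebra_simps)
    also have "\<dots> = m * (Q + S)"
      unfolding Q_def S_def by (simp add: sum.distrib sum_distrib_left distrib_left)
    finally show ?thesis .
  qed
  have numOR: "(\<Sum>X\<in>G. q X * reach_prob k tau1 (OR_pi1 G k tau1) OR_pi0 X) = m * Q"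
    unfolding Q_def by (simp add: R1 sum_distrib_left algebra_simps cong: sum.cong)
  have effOR: "efficiency G k q tau1 tau0 (OR_pi1 G k tau1) OR_pi0 = Q / (Q + S)"
    unfolding efficiency_def denOR numOR using mpos by simp
  have valid: "valid_policy G k (OR_pi1 G k tau1) OR_pi0"
    unfolding valid_policy_def OR_pi1_def OR_pi0_def
    using rho mpos P1pos mle by (auto simp: divide_le_eq_1 less_le_not_le)
  have eo: "equal_opportunity G k tau1 (OR_pi1 G k tau1) OR_pi0"
    unfolding equal_opportunity_def using R1 by simp
  have opt: "efficiency G k q tau1 tau0 pi1 pi0 \<le> Q / (Q + S)"
    if V: "valid_policy G k pi1 pi0" and E: "equal_opportunity G k tau1 pi1 pi0"
      and D: "0 < efficiency_denom G k q tau1 tau0 pi1 pi0" for pi1 pi0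
  proof -
    obtain X0 where X0: "X0 \<in> G" using Gne by blast
    define M where "M = reach_prob k tau1 pi1 pi0 X0"
    have MX: "reach_prob k tau1 pi1 pi0 X = M" if "X \<in> G" for X
      using E that X0 unfolding equal_opportunity_def M_def by blast
    have Mnn: "0 \<le> M" unfolding M_def reach_prob_def
    proof (intro prod_nonneg)
      fix i assume i: "i \<in> {1..k}"
      have h: "0 \<le> tau0 i X0" "tau0 i X0 < tau1 i X0" "tau1 i X0 \<le> 1" using tb i X0 by auto
      have p: "0 \<le> pi1 i X0" "0 \<le> pi0 i X0"
        using V i X0 unfolding valid_policy_def by auto
      show "0 \<le> tau1 i X0 * pi1 i X0 + (1 - tau1 i X0) * pi0 i X0"
        using h p by (intro add_nonneg_nonneg mult_nonneg_nonneg) auto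
    qed
    have NX: "M * r X \<le> reach_prob k tau0 pi1 pi0 X" if "X \<in> G" for X
    proof -
      have "r X * reach_prob k tau1 pi1 pi0 X
          = (\<Prod>i\<in>{1..k}. (tau0 i X / tau1 i X) * (tau1 i X * pi1 i X + (1 - tau1 i X) * pi0 i X))"
        unfolding r_def reach_prob_def by (rule prod.distrib[symmetric])
      also have "\<dots> \<le> reach_prob k tau0 pi1 pi0 X"
        unfolding reach_prob_def
      proof (rule prod_mono, safe)
        fix i assume i: "i \<in> {1..k}"
        have h: "0 \<le> tau0 i X" "tau0 i X < tau1 i X" "tau1 i X \<le> 1" using tb i that by auto
        have p: "0 \<le> pi1 i X" "pi1 i X \<le> 1" "0 \<le> pi0 i X" "pi0 i X \<le> 1"
          using V i that unfolding valid_policy_def by auto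
        show "0 \<le> (tau0 i X / tau1 i X) * (tau1 i X * pi1 i X + (1 - tau1 i X) * pi0 i X)"
          using h p by (intro mult_nonneg_nonneg add_nonneg_nonneg) auto
        show "(tau0 i X / tau1 i X) * (tau1 i X * pi1 i X + (1 - tau1 i X) * pi0 i X)
            \<le> tau0 i X * pi1 i X + (1 - tau0 i X) * pi0 i X"
          using h p by (intro stage_ineq) auto
      qed
      finally show ?thesis using MX[OF that] by (simp add: mult.commute)
    qed
    have num: "(\<Sum>X\<in>G. q X * reach_prob k tau1 pi1 pi0 X) = M * Q"
      unfolding Q_def by (simp add: MX sum_distrib_left algebra_simps cong: sum.cong)
    define B where "B = (\<Sum>X\<in>G. (1 - q X) * reach_prob k tau0 pi1 pi0 X)"
    have den: "efficiency_denom G k q tau1 tau0 pi1 pi0 = M * Q + B"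
      unfolding efficiency_denom_def B_def by (simp add: sum.distrib num[symmetric])
    have BS: "M * S \<le> B" unfolding S_def B_def sum_distrib_left
    proof (rule sum_mono)
      fix X assume X: "X \<in> G"
      have "M * ((1 - q X) * r X) = (1 - q X) * (M * r X)" by simp
      also have "\<dots> \<le> (1 - q X) * reach_prob k tau0 pi1 pi0 X"
        using NX[OF X] qb X by (intro mult_left_mono) auto
      finally show "M * ((1 - q X) * r X) \<le> (1 - q X) * reach_prob k tau0 pi1 pi0 X" .
    qed
    show ?thesis
    proof (cases "M = 0")
      case True
      have "efficiency G k q tau1 tau0 pi1 pi0 = 0" unfolding efficiency_def num True by simp
      thus ?thesis using Qpos Snn by simp
    next
      case False
      hence Mp: "0 < M" using Mnn by simp
      have "efficiency G k q tau1 tau0 pi1 pi0 = (M * Q) / (M * Q + B)"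
        unfolding efficiency_def num den ..
      also have "\<dots> \<le> (M * Q) / (M * Q + M * S)"
        using Mp Qpos Snn BS by (intro frac_mono) auto
      also have "\<dots> = Q / (Q + S)" using Mp by (simp add: distrib_left[symmetric])
      finally show ?thesis .
    qed
  qed
  show ?thesis
    using valid eo opt effOR denOR mpos Qpos Snn
    unfolding Q_def S_def r_def by (auto intro!: mult_pos_pos add_pos_nonneg)
qed

end
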